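(* Let $(X,\tau)$ be a topological accessibility space. Then: (a) if $\tau$ is sequential, it is Fréchet; (b) if $\tau$ has countable $\mathrm{S}_0$-character (i.e., a weak base $(\mathcal{B}_x)_{x\in X}$ with each $\mathcal{B}_x$ countable), then $\tau$ has countable character (is first-countable); (c) if $\tau$ is symmetrizable, then it is semi-metrizable.
   Context: A topological space $(X,\tau)$ is an accessibility space if for each $x_0\in X$ and every $H\subset X$ with $x_0\in\mathrm{cl}(H\setminus\{x_0\})$, there is a closed set $F$ with $x_0\in\mathrm{cl}(F\setminus\{x_0\})$ and $x_0\notin\mathrm{cl}(F\setminus H\setminus\{x_0\})$. Sequential: every sequentially closed set (containing all limits of sequences in it) is closed. Fréchet: whenever $x\in\mathrm{cl}A$, some sequence in $A$ converges to $x$. A weak base is a family $(\mathcal{B}_x)_{x\in X}$ of filter-bases with $x\in\bigcap\mathcal{B}_x$ such that $U$ is open iff for every $x\in U$ some $V\in\mathcal{B}_x$ satisfies $V\subset U$. A semi-metric is $d:X\times X\to[0,\infty)$ symmetric with $d(x,y)=0\iff x=y$, with balls $B(x,\epsilon)=\{y:d(x,y)<\epsilon\}$. $\tau$ is symmetrizable if for some semi-metric $d$, $O$ is open iff for every $x\in O$ some $B(x,\epsilon)\subset O$; $\tau$ is semi-metrizable if for some semi-metric $d$, $x\in\mathrm{cl}A\iff\inf_{a\in A}d(x,a)=0$ for all $x,A$. *)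

theory Defs
  imports "HOL-Analysis.Analysis"
begin

definition accessibility_space :: "'a topology \<Rightarrow> bool" where
  "accessibility_space X \<longleftrightarrow>
     (\<forall>x0 \<in> topspace X. \<forall>H. H \<subseteq> topspace X \<longrightarrow> x0 \<in> X closure_of (H - {x0}) \<longrightarrow>
        (\<exists>F. closedin X F \<and> x0 \<in> X closure_of (F - {x0}) \<and>
             x0 \<notin> X closure_of (F - H - {x0})))"

definition sequentially_closedin :: "'a topology \<Rightarrow> 'a set \<Rightarrow> bool" where
  "sequentially_closedin X A \<longleftrightarrow>
     (\<forall>\<sigma> x. (\<forall>n. \<sigma> n \<in> A) \<and> limitin X \<sigma> x sequentially \<longrightarrow> x \<in> A)"

definition sequential_space :: "'a topology \<Rightarrow> bool" where
  "sequential_space X \<longleftrightarrow>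
     (\<forall>A. A \<subseteq> topspace X \<and> sequentially_closedin X A \<longrightarrow> closedin X A)"

definition frechet_space :: "'a topology \<Rightarrow> bool" where
  "frechet_space X \<longleftrightarrow>
     (\<forall>A x. A \<subseteq> topspace X \<and> x \<in> X closure_of A \<longrightarrow>
        (\<exists>\<sigma>. (\<forall>n. \<sigma> n \<in> A) \<and> limitin X \<sigma> x sequentially))"

definition filter_base :: "'a set set \<Rightarrow> bool" where
  "filter_base \<B> \<longleftrightarrow> \<B> \<noteq> {} \<and>
     (\<forall>V1 \<in> \<B>. \<forall>V2 \<in> \<B>. \<exists>V3 \<in> \<B>. V3 \<subseteq> V1 \<inter> V2)"

definition weak_base :: "'a topology \<Rightarrow> ('a \<Rightarrow> 'a set set) \<Rightarrow> bool" where
  "weak_base X \<B> \<longleftrightarrow>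
     (\<forall>x \<in> topspace X. filter_base (\<B> x) \<and> (\<forall>V \<in> \<B> x. x \<in> V \<and> V \<subseteq> topspace X)) \<and>
     (\<forall>U. U \<subseteq> topspace X \<longrightarrow>
        (openin X U \<longleftrightarrow> (\<forall>x \<in> U. \<exists>V \<in> \<B> x. V \<subseteq> U)))"

definition countable_S0_character :: "'a topology \<Rightarrow> bool" where
  "countable_S0_character X \<longleftrightarrow>
     (\<exists>\<B>. weak_base X \<B> \<and> (\<forall>x \<in> topspace X. countable (\<B> x)))"

definition semimetric_on :: "'a set \<Rightarrow> ('a \<Rightarrow> 'a \<Rightarrow> real) \<Rightarrow> bool" where
  "semimetric_on S d \<longleftrightarrow>
     (\<forall>x \<in> S. \<forall>y \<in> S. d x y \<ge> 0 \<and> d x y = d y x \<and> (d x y = 0 \<longleftrightarrow> x = y))"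

definition sball :: "'a set \<Rightarrow> ('a \<Rightarrow> 'a \<Rightarrow> real) \<Rightarrow> 'a \<Rightarrow> real \<Rightarrow> 'a set" where
  "sball S d x \<epsilon> = {y \<in> S. d x y < \<epsilon>}"

definition symmetrizable :: "'a topology \<Rightarrow> bool" where
  "symmetrizable X \<longleftrightarrow>
     (\<exists>d. semimetric_on (topspace X) d \<and>
        (\<forall>W. W \<subseteq> topspace X \<longrightarrow>
           (openin X W \<longleftrightarrow> (\<forall>x \<in> W. \<exists>\<epsilon>>0. sball (topspace X) d x \<epsilon> \<subseteq> W))))"

text \<open>inf over a in A of d x a = 0, written without Inf (no issue for empty A).\<close>
definition semimetrizable :: "'a topology \<Rightarrow> bool" where
  "semimetrizable X \<longleftrightarrow>
     (\<exists>d. semimetric_on (topspace X) d \<and>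
        (\<forall>x \<in> topspace X. \<forall>A. A \<subseteq> topspace X \<longrightarrow>
           (x \<in> X closure_of A \<longleftrightarrow> (\<forall>\<epsilon>>0. \<exists>a \<in> A. d x a < \<epsilon>))))"

end

theory Submission
  imports Defs
begin

lemma acc_not_closed:
  assumes "x \<in> X closure_of (F - {x})"
  shows "\<not> closedin X (F - {x})"
  using assms closure_of_closedin by fastforce

lemma wb_open:
  assumes wb: "weak_base X B" and U: "openin X U" and x: "x \<in> U"
  shows "\<exists>V \<in> B x. V \<subseteq> U"
proof -
  have h: "\<forall>U. U \<subseteq> topspace X \<longrightarrow> (openin X U \<longleftrightarrow> (\<forall>x \<in> U. \<exists>V \<in> B x. V \<subseteq> U))"
    using wb unfolding weak_base_def by (rule conjunct2)
  have "U \<subseteq> topspace X" using U by (rule openin_subset)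
  then have "\<forall>x \<in> U. \<exists>V \<in> B x. V \<subseteq> U" using h U by simp
  then show ?thesis using x by simp
qed

lemma nbhd:
  assumes acc: "accessibility_space X" and wb: "weak_base X B"
    and x: "x \<in> topspace X" and V: "V \<in> B x"
  shows "x \<in> X interior_of V"
proof (rule ccontr)
  assume nx: "x \<notin> X interior_of V"
  let ?H = "topspace X - V"
  have xV: "x \<in> V" and Vsub: "V \<subseteq> topspace X" using wb x V unfolding weak_base_def by auto
  have fb: "filter_base (B x)" using wb x unfolding weak_base_def by auto
  have "x \<in> X closure_of ?H" using nx x by (simp add: interior_of_closure_of)
  moreover have "?H - {x} = ?H" using xV by auto
  ultimately have "x \<in> X closure_of (?H - {x})" by simp
  then obtain F where F: "closedin X F" "x \<in> X closure_of (F - {x})"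
    "x \<notin> X closure_of (F - ?H - {x})"
    using acc x unfolding accessibility_space_def by blast
  define W where "W = topspace X - X closure_of (F - ?H - {x})"
  have oW: "openin X W" unfolding W_def by (simp add: openin_diff)
  have xW: "x \<in> W" using x F unfolding W_def by auto
  obtain V1 where V1: "V1 \<in> B x" "V1 \<subseteq> W"
    using wb oW xW openin_subset[OF oW] unfolding weak_base_def by blast
  obtain V3 where V3: "V3 \<in> B x" "V3 \<subseteq> V \<inter> V1"
    using fb V V1 unfolding filter_base_def by blast
  have V3F: "V3 \<inter> F \<subseteq> {x}"
  proof
    fix y assume y: "y \<in> V3 \<inter> F"
    show "y \<in> {x}"
    proof (rule ccontr)
      assume "y \<notin> {x}"
      then have "y \<in> F - ?H - {x}" using y V3 by auto
      moreover have "F - ?H - {x} \<subseteq> topspace X" using closedin_subset[OF F(1)] by auto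
      ultimately have "y \<in> X closure_of (F - ?H - {x})" using closure_of_subset by blast
      moreover have "y \<in> W" using y V3 V1 by auto
      ultimately show False unfolding W_def by auto
    qed
  qed
  define Op where "Op = topspace X - (F - {x})"
  have "openin X Op"
  proof -
    have "\<forall>y \<in> Op. \<exists>V' \<in> B y. V' \<subseteq> Op"
    proof
      fix y assume y: "y \<in> Op"
      show "\<exists>V' \<in> B y. V' \<subseteq> Op"
      proof (cases "y = x")
        case True
        have "V3 \<subseteq> topspace X" using wb x V3 unfolding weak_base_def by auto
        then have "V3 \<subseteq> Op" using V3F unfolding Op_def by auto
        then show ?thesis using True V3 by blast
      next
        case False
        have o: "openin X (topspace X - F)" using F(1) by auto
        have "y \<in> topspace X - F" using y False unfolding Op_def by auto
        then obtain V' where "V' \<in> B y" "V' \<subseteq> topspace X - F"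
          using wb o openin_subset[OF o] unfolding weak_base_def by blast
        then show ?thesis unfolding Op_def by blast
      qed
    qed
    moreover have "Op \<subseteq> topspace X" unfolding Op_def by auto
    ultimately show ?thesis using wb unfolding weak_base_def by blast
  qed
  then have "closedin X (topspace X - Op)" by auto
  moreover have "topspace X - Op = F - {x}" using closedin_subset[OF F(1)] unfolding Op_def by auto
  ultimately show False using acc_not_closed[OF F(2)] by simp
qed

lemma partA:
  assumes acc: "accessibility_space X" and seq: "sequential_space X"
  shows "frechet_space X"
  unfolding frechet_space_def
proof (intro allI impI)
  fix A x assume Ax: "A \<subseteq> topspace X \<and> x \<in> X closure_of A"
  have x: "x \<in> topspace X" using Ax in_closure_of by metis
  show "\<exists>\<sigma>. (\<forall>n. \<sigma> n \<in> A) \<and> limitin X \<sigma> x sequentially"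
  proof (cases "x \<in> A")
    case True
    then show ?thesis using x by (intro exI[of _ "\<lambda>n. x"]) simp
  next
    case False
    then have "A - {x} = A" by auto
    then have "x \<in> X closure_of (A - {x})" using Ax by simp
    then obtain F where F: "closedin X F" "x \<in> X closure_of (F - {x})"
      "x \<notin> X closure_of (F - A - {x})"
      using acc x conjunct1[OF Ax] unfolding accessibility_space_def by meson
    have nc: "\<not> closedin X (F - {x})" using acc_not_closed[OF F(2)] .
    have "F - {x} \<subseteq> topspace X" using closedin_subset[OF F(1)] by auto
    then have "\<not> sequentially_closedin X (F - {x})" using seq nc unfolding sequential_space_def by meson
    then obtain \<sigma> y where s: "\<forall>n. \<sigma> n \<in> F - {x}" "limitin X \<sigma> y sequentially" "y \<notin> F - {x}"
      unfolding sequentially_closedin_def by blast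
    have "y \<in> F" using limitin_closedin[OF s(2) F(1)] s(1) by simp
    then have yx: "y = x" using s(3) by auto
    define U where "U = topspace X - X closure_of (F - A - {x})"
    have "openin X U" "x \<in> U" using x F(3) unfolding U_def by (auto simp: openin_diff)
    then have "eventually (\<lambda>n. \<sigma> n \<in> U) sequentially" using s(2) yx unfolding limitin_def by blast
    then obtain N where N: "\<forall>n\<ge>N. \<sigma> n \<in> U" unfolding eventually_sequentially by blast
    have "\<forall>n. \<sigma> (n + N) \<in> A"
    proof
      fix n
      have u: "\<sigma> (n + N) \<in> U" using N by simp
      have f: "\<sigma> (n + N) \<in> F - {x}" using s(1) by blast
      show "\<sigma> (n + N) \<in> A"
      proof (rule ccontr)
        assume "\<sigma> (n + N) \<notin> A"
        then have "\<sigma> (n + N) \<in> F - A - {x}" using f by auto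
        moreover have "F - A - {x} \<subseteq> topspace X" using closedin_subset[OF F(1)] by auto
        ultimately have "\<sigma> (n + N) \<in> X closure_of (F - A - {x})" using closure_of_subset by blast
        then show False using u unfolding U_def by auto
      qed
    qed
    moreover have "limitin X (\<lambda>n. \<sigma> (n + N)) x sequentially"
      using limitin_sequentially_offset[OF s(2)] yx by simp
    ultimately show ?thesis by (intro exI[of _ "\<lambda>n. \<sigma> (n + N)"]) simp
  qed
qed

lemma partB:
  assumes acc: "accessibility_space X" and c: "countable_S0_character X"
  shows "first_countable X"
proof -
  obtain B where wb: "weak_base X B" and cB: "\<forall>x \<in> topspace X. countable (B x)"
    using c unfolding countable_S0_character_def by meson
  show ?thesis unfolding first_countable_def
  proof
    fix x assume x: "x \<in> topspace X"
    show "\<exists>\<B>. countable \<B> \<and> (\<forall>V \<in> \<B>. openin X V) \<and>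
             (\<forall>U. openin X U \<and> x \<in> U \<longrightarrow> (\<exists>V \<in> \<B>. x \<in> V \<and> V \<subseteq> U))"
    proof (intro exI[of _ "(\<lambda>V. X interior_of V) ` B x"] conjI allI impI)
      show "countable ((\<lambda>V. X interior_of V) ` B x)" using cB x by simp
      show "\<forall>V\<in>(\<lambda>V. X interior_of V) ` B x. openin X V" by auto
      fix U assume U: "openin X U \<and> x \<in> U"
      obtain V where V: "V \<in> B x" "V \<subseteq> U"
        using wb_open[OF wb conjunct1[OF U] conjunct2[OF U]] by (elim bexE)
      have i1: "x \<in> X interior_of V" using nbhd[OF acc wb x V(1)] .
      have i2: "X interior_of V \<subseteq> U" by (rule order_trans[OF interior_of_subset V(2)])
      have i3: "X interior_of V \<in> (\<lambda>V. X interior_of V) ` B x" using V(1) by (rule imageI)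
      show "\<exists>V\<in>(\<lambda>V. X interior_of V) ` B x. x \<in> V \<and> V \<subseteq> U"
      proof (rule bexI[where x="X interior_of V"])
        show "x \<in> X interior_of V \<and> X interior_of V \<subseteq> U" using i1 i2 by (rule conjI)
        show "X interior_of V \<in> (\<lambda>V. X interior_of V) ` B x" by (rule i3)
      qed
    qed
  qed
qed

lemma partC:
  assumes acc: "accessibility_space X" and s: "symmetrizable X"
  shows "semimetrizable X"
proof -
  obtain d where sm: "semimetric_on (topspace X) d" and op:
    "\<forall>W. W \<subseteq> topspace X \<longrightarrow>
           (openin X W \<longleftrightarrow> (\<forall>x \<in> W. \<exists>\<epsilon>>0. sball (topspace X) d x \<epsilon> \<subseteq> W))"
    using s unfolding symmetrizable_def by blast
  define B where "B x = {sball (topspace X) d x e | e. e > 0}" for x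
  have wb: "weak_base X B"
    unfolding weak_base_def
  proof (intro conjI ballI allI impI)
    fix x assume x: "x \<in> topspace X"
    show "filter_base (B x)" unfolding filter_base_def
    proof (intro conjI ballI)
      show "B x \<noteq> {}" unfolding B_def by (auto intro: exI[of _ 1])
      fix V1 V2 assume "V1 \<in> B x" "V2 \<in> B x"
      then obtain e1 e2 where "e1 > 0" "e2 > 0" "V1 = sball (topspace X) d x e1"
        "V2 = sball (topspace X) d x e2" unfolding B_def by blast
      then show "\<exists>V3\<in>B x. V3 \<subseteq> V1 \<inter> V2" unfolding B_def sball_def
        by (intro bexI[of _ "sball (topspace X) d x (min e1 e2)"]) (auto simp: sball_def intro!: exI[of _ "min e1 e2"])
    qed
    fix V assume "V \<in> B x"
    then obtain e where "e > 0" "V = sball (topspace X) d x e" unfolding B_def by blast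
    moreover have "d x x = 0" using sm x unfolding semimetric_on_def by blast
    ultimately show "x \<in> V" and "V \<subseteq> topspace X" using x unfolding sball_def by auto
  next
    fix U :: "'a set" assume U: "U \<subseteq> topspace X"
    have e: "(\<exists>V\<in>B y. V \<subseteq> U) \<longleftrightarrow> (\<exists>\<epsilon>>0. sball (topspace X) d y \<epsilon> \<subseteq> U)" for y
      unfolding B_def by blast
    have "openin X U \<longleftrightarrow> (\<forall>x \<in> U. \<exists>\<epsilon>>0. sball (topspace X) d x \<epsilon> \<subseteq> U)"
      using op U by simp
    then show "openin X U = (\<forall>x\<in>U. \<exists>V\<in>B x. V \<subseteq> U)" by (simp only: e)
  qed
  show ?thesis unfolding semimetrizable_def
  proof (intro exI[of _ d] conjI sm ballI allI impI)
    fix x A assume x: "x \<in> topspace X" and A: "A \<subseteq> topspace X"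
    show "x \<in> X closure_of A \<longleftrightarrow> (\<forall>\<epsilon>>0. \<exists>a\<in>A. d x a < \<epsilon>)"
    proof
      assume xc: "x \<in> X closure_of A"
      show "\<forall>\<epsilon>>0. \<exists>a\<in>A. d x a < \<epsilon>"
      proof (intro allI impI)
        fix e :: real assume e: "e > 0"
        have "sball (topspace X) d x e \<in> B x" using e unfolding B_def by blast
        then have "x \<in> X interior_of (sball (topspace X) d x e)" using nbhd[OF acc wb x] by blast
        moreover have "openin X (X interior_of (sball (topspace X) d x e))" by simp
        ultimately obtain a where a: "a \<in> A" "a \<in> X interior_of (sball (topspace X) d x e)"
          using xc unfolding in_closure_of by blast
        have "a \<in> sball (topspace X) d x e" by (rule subsetD[OF interior_of_subset a(2)])
        then have "d x a < e" unfolding sball_def by simp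
        then show "\<exists>a\<in>A. d x a < e" using a(1) by blast
      qed
    next
      assume h: "\<forall>\<epsilon>>0. \<exists>a\<in>A. d x a < \<epsilon>"
      show "x \<in> X closure_of A"
      proof (rule ccontr)
        assume nx: "x \<notin> X closure_of A"
        define W where "W = topspace X - X closure_of A"
        have "openin X W" unfolding W_def by (simp add: openin_diff)
        moreover have "x \<in> W" using x nx unfolding W_def by auto
        moreover have "W \<subseteq> topspace X" unfolding W_def by blast
        ultimately obtain e where e: "e > 0" "sball (topspace X) d x e \<subseteq> W"
          using op by meson
        then obtain a where a: "a \<in> A" "d x a < e" using h by blast
        then have "a \<in> W" using e A unfolding sball_def by auto
        moreover have "a \<in> X closure_of A" using a A closure_of_subset by blast
        ultimately show False unfolding W_def by auto
      qed
    qed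
  qed
qed

theorem corollary4p3:
  fixes X :: "'a topology"
  assumes "accessibility_space X"
  shows "(sequential_space X \<longrightarrow> frechet_space X) \<and>
         (countable_S0_character X \<longrightarrow> first_countable X) \<and>
         (symmetrizable X \<longrightarrow> semimetrizable X)"
  using partA partB partC assms by blast

end
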